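(* Let $p\equiv 1\pmod 4$ be a prime. Then $$\prod_{1\le i<j\le \frac{p-1}{2}}(j^2-i^2)\equiv-\Big(\frac{p-1}{2}\Big)!\pmod p.$$ *)

theory Defs
  imports "HOL-Number_Theory.Number_Theory"
begin

end

theory Submission imports Defs begin

lemma prodA:
  assumes "j \<ge> (1::nat)"
  shows "int j * (\<Prod>i\<in>{1..<j}. (int j ^ 2 - int i ^ 2)) = fact (2*j-1)"
proof -
  have e1: "(\<Prod>i\<in>{1..<j}. (int j ^ 2 - int i ^ 2)) = (\<Prod>i\<in>{1..<j}. int (j - i) * int (j + i))"
    by (rule prod.cong) (auto simp: power2_eq_square algebra_simps of_nat_diff)
  have e2: "(\<Prod>i\<in>{1..<j}. (j - i)) = \<Prod>{1..<j}"
    by (rule prod.reindex_bij_witness[of _ "\<lambda>i. j-i" "\<lambda>i. j-i"]) auto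
  have e3: "(\<Prod>i\<in>{1..<j}. (j + i)) = \<Prod>{Suc j..2*j-1}"
    by (rule prod.reindex_bij_witness[of _ "\<lambda>i. i-j" "\<lambda>i. j+i"]) auto
  have e4: "\<Prod>{1..<j} = (fact (j-1) :: nat)"
    using assms by (simp add: fact_prod atLeastLessThanSuc_atLeastAtMost[symmetric])
  have e5: "(fact (2*j-1)::nat) = fact j * \<Prod>{Suc j..2*j-1}"
    using fact_eq_fact_times[of j "2*j-1"] assms by simp
  have e6: "(fact j :: nat) = j * fact (j-1)"
    using assms by (metis Suc_diff_1 fact_Suc less_le_trans zero_less_one of_nat_id)
  have "int j * (\<Prod>i\<in>{1..<j}. (int j ^ 2 - int i ^ 2)) = int (j * (\<Prod>i\<in>{1..<j}. (j - i)) * (\<Prod>i\<in>{1..<j}. (j + i)))"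
    unfolding e1 by (simp add: prod.distrib of_nat_mult)
  also have "\<dots> = int (fact (2*j-1))"
    unfolding e2 e3 e4 e5 e6 by simp
  finally show ?thesis by simp
qed

lemma factcompl:
  assumes p: "prime p" "odd p" and m: "m < p"
  shows "[fact m * fact (p-1-m) = - ((-1)^m :: int)] (mod int p)"
proof -
  have w: "[fact (p-1) = (-1::int)] (mod int p)"
    using wilson_theorem[of p] p by simp
  have f: "(fact (p-1)::int) = fact m * int (\<Prod>{Suc m..p-1})"
  proof -
    have "(fact (p-1)::nat) = fact m * \<Prod>{Suc m..p-1}" using fact_eq_fact_times[of m "p-1"] m by simp
    hence "int (fact (p-1)) = int (fact m * \<Prod>{Suc m..p-1})" by simp
    thus ?thesis by (simp only: of_nat_fact of_nat_mult)
  qed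
  have c: "[int (\<Prod>{Suc m..p-1}) = (\<Prod>i\<in>{Suc m..p-1}. - int (p - i))] (mod int p)"
    unfolding of_nat_prod
  proof (rule cong_prod)
    fix i assume "i \<in> {Suc m..p-1}"
    hence "int i = int p + (- int (p - i))" by auto
    thus "[int i = - int (p - i)] (mod int p)"
      by (metis cong_add_rcancel_0 cong_refl cong_mult_self_right mult_1 add.commute)
  qed
  have d: "(\<Prod>i\<in>{Suc m..p-1}. - int (p - i)) = (-1)^(p-1-m) * (\<Prod>i\<in>{Suc m..p-1}. int (p - i))"
    by (simp add: prod_uminus)
  have e: "(\<Prod>i\<in>{Suc m..p-1}. (p - i)) = \<Prod>{1..p-1-m}"
    by (rule prod.reindex_bij_witness[of _ "\<lambda>i. p-i" "\<lambda>i. p-i"]) auto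
  have e': "(\<Prod>i\<in>{Suc m..p-1}. int (p - i)) = fact (p-1-m)"
    using e by (metis fact_prod of_nat_prod)
  have par: "(-1::int)^(p-1-m) = (-1)^m"
  proof -
    have "even (p-1)" using p by simp
    moreover have "p-1 = (p-1-m) + m" using m by simp
    ultimately have "even (p-1-m) = even m" by (metis even_add)
    thus ?thesis by (simp add: minus_one_power_iff)
  qed
  have g: "[int (\<Prod>{Suc m..p-1}) = (-1)^m * fact (p-1-m)] (mod int p)"
    using c unfolding d e' par .
  have h: "[fact m * int (\<Prod>{Suc m..p-1}) = fact m * ((-1)^m * fact (p-1-m))] (mod int p)"
    by (rule cong_mult[OF cong_refl g])
  have "[fact m * ((-1)^m * fact (p-1-m)) = (-1::int)] (mod int p)"
    using cong_trans[OF cong_sym[OF h] w[unfolded f]] .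
  hence H: "[(-1)^m * (fact m * ((-1)^m * fact (p-1-m))) = (-1)^m * (-1::int)] (mod int p)"
    by (rule cong_mult[OF cong_refl])
  have eq: "(-1::int)^m * (fact m * ((-1)^m * fact (p-1-m))) = fact m * fact (p-1-m)"
  proof -
    have "(-1::int)^m * (-1)^m = 1" by (simp flip: power_add)
    thus ?thesis by (metis mult.assoc mult.left_commute mult_1)
  qed
  show ?thesis using H unfolding eq by simp
qed

theorem lemma2p1:
  fixes p :: nat
  assumes "prime p" and "[p = 1] (mod 4)"
  shows "[(\<Prod>(i, j) \<in> {(i, j). 1 \<le> i \<and> i < j \<and> j \<le> (p - 1) div 2}.
            (int j ^ 2 - int i ^ 2)) = - int (fact ((p - 1) div 2))] (mod int p)"
proof -
  define n where "n = (p - 1) div 2"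
  have p1: "p mod 4 = 1" using assms(2) by (simp add: cong_def)
  define k where "k = p div 4"
  have k: "n = 2*k" unfolding n_def k_def using p1 by presburger
  have pn: "p = 2*n+1" unfolding n_def using p1 by presburger
  have S: "(\<Prod>(i, j) \<in> {(i, j). 1 \<le> i \<and> i < j \<and> j \<le> n}. (int j ^ 2 - int i ^ 2))
        = (\<Prod>(j,i) \<in> (SIGMA j:{1..n}. {1..<j}). (int j ^ 2 - int i ^ 2))"
    by (rule prod.reindex_bij_witness[of _ prod.swap prod.swap]) auto
  also have "\<dots> = (\<Prod>j\<in>{1..n}. \<Prod>i\<in>{1..<j}. (int j ^ 2 - int i ^ 2))"
    by (rule prod.Sigma[symmetric]) auto
  finally have S2: "(\<Prod>(i, j) \<in> {(i, j). 1 \<le> i \<and> i < j \<and> j \<le> n}. (int j ^ 2 - int i ^ 2))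
        = (\<Prod>j\<in>{1..n}. \<Prod>i\<in>{1..<j}. (int j ^ 2 - int i ^ 2))" .
  have FP: "fact n * (\<Prod>j\<in>{1..n}. \<Prod>i\<in>{1..<j}. (int j ^ 2 - int i ^ 2)) = (\<Prod>j\<in>{1..n}. fact (2*j-1))"
  proof -
    have "fact n * (\<Prod>j\<in>{1..n}. \<Prod>i\<in>{1..<j}. (int j ^ 2 - int i ^ 2))
       = (\<Prod>j\<in>{1..n}. int j * (\<Prod>i\<in>{1..<j}. (int j ^ 2 - int i ^ 2)))"
      by (simp add: fact_prod prod.distrib)
    also have "\<dots> = (\<Prod>j\<in>{1..n}. fact (2*j-1))"
      by (rule prod.cong[OF refl], rule prodA) simp
    finally show ?thesis .
  qed
  have F1: "[(\<Prod>j\<in>{1..n}. fact (2*j-1)) = (1::int)] (mod int p)"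
  proof -
    have U: "{1..n} = {1..k} \<union> {k+1..n}" using k by auto
    have "(\<Prod>j\<in>{1..n}. (fact (2*j-1)::int)) = (\<Prod>j\<in>{1..k}. fact (2*j-1)) * (\<Prod>j\<in>{k+1..n}. fact (2*j-1))"
      unfolding U by (rule prod.union_disjoint) auto
    also have "(\<Prod>j\<in>{k+1..n}. (fact (2*j-1)::int)) = (\<Prod>j\<in>{1..k}. fact (2*(n+1-j)-1))"
      by (rule prod.reindex_bij_witness[of _ "\<lambda>j. n+1-j" "\<lambda>j. n+1-j"]) (use k in auto)
    finally have E: "(\<Prod>j\<in>{1..n}. (fact (2*j-1)::int)) = (\<Prod>j\<in>{1..k}. fact (2*j-1) * fact (2*(n+1-j)-1))"
      by (simp add: prod.distrib)
    have "[(\<Prod>j\<in>{1..k}. (fact (2*j-1)::int) * fact (2*(n+1-j)-1)) = (\<Prod>j\<in>{1..k}. 1)] (mod int p)"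
    proof (rule cong_prod)
      fix j assume j: "j \<in> {1..k}"
      have m: "2*j-1 < p" "p - 1 - (2*j-1) = 2*(n+1-j)-1" using j k pn by auto
      have o: "odd (2*j-1)" using j by auto
      have "[fact (2*j-1) * fact (p - 1 - (2*j-1)) = - ((-1)^(2*j-1) :: int)] (mod int p)"
        by (rule factcompl) (use assms(1) pn m in auto)
      thus "[(fact (2*j-1)::int) * fact (2*(n+1-j)-1) = 1] (mod int p)"
        using o unfolding m(2) by simp
    qed
    thus ?thesis unfolding E by simp
  qed
  have F2: "[(fact n) * (fact n) = (-1::int)] (mod int p)"
  proof -
    have "[fact n * fact (p - 1 - n) = - ((-1)^n :: int)] (mod int p)"
      by (rule factcompl) (use assms(1) pn in auto)
    moreover have "p - 1 - n = n" using pn by simp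
    ultimately show ?thesis using k by simp
  qed
  define P where "P = (\<Prod>j\<in>{1..n}. \<Prod>i\<in>{1..<j}. (int j ^ 2 - int i ^ 2))"
  have A: "[fact n * P = fact n * (- fact n :: int)] (mod int p)"
    using F1 F2 FP unfolding P_def
    by (metis (no_types, lifting) cong_minus_minus_iff cong_sym cong_trans minus_mult_right minus_minus)
  have nd: "\<not> int p dvd fact n"
  proof
    assume "int p dvd fact n"
    hence "p dvd fact n" by (metis of_nat_dvd_iff of_nat_fact)
    thus False using prime_dvd_fact_iff[OF assms(1)] pn by simp
  qed
  have cp: "coprime (fact n) (int p)"
    by (subst coprime_commute, rule prime_imp_coprime) (use assms(1) nd in auto)
  have "[P = - fact n] (mod int p)"
    using A cp cong_mult_lcancel by blast
  thus ?thesis using S2 unfolding P_def n_def by simp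
qed
end
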